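(* Let $n\ge 3$ and consider the cycle graph on nodes $1,\dots,n$ with arbitrary measurements $\widetilde{R}_{12},\dots,\widetilde{R}_{n-1,n},\widetilde{R}_{n1}\in\mathrm{SO}(3)$, and let $\gamma\in[-\pi,\pi]$ be the rotation angle of the cycle error $E$. Then the set of eigenvalues of $\widetilde{R}$ is $$\sigma(\widetilde{R})=\big\{1+2\cos(\gamma/n-2k\pi/n)\big\}_{k=0,\dots,n-1}\ \cup\ \big\{1+2\cos(2k\pi/n)\big\}_{k=0,\dots,n-1}.$$
   Context: Cycle-graph setup: nodes $1,\dots,n$ ($n\ge3$), edges $\{i,i+1\}$ for $i=1,\dots,n-1$ and $\{n,1\}$; write $i\sim j$ for an edge. Measurements $\widetilde{R}_{ij}\in\mathrm{SO}(3)$ on edges with $\widetilde{R}_{ji}=\widetilde{R}_{ij}^\top$. The symmetric $3n\times3n$ block matrix $\widetilde{R}$ has $(i,j)$ $3\times3$ block $I_3$ if $i=j$, $\widetilde{R}_{ij}$ if $i\sim j$, and $0$ otherwise. The cycle error is $E:=\widetilde{R}_{12}\widetilde{R}_{23}\cdots\widetilde{R}_{n-1,n}\widetilde{R}_{n1}\in\mathrm{SO}(3)$ (product left to right), and $\gamma=\angle(E)\in[-\pi,\pi]$ is its rotation angle, i.e. $E=\exp(\gamma[\hat n]_\times)$ for a unit axis $\hat n$. *)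

theory Defs
  imports Complex_Main "Jordan_Normal_Form.Char_Poly"
begin

definition SO3 :: "real mat set" where
  "SO3 = {Q. Q \<in> carrier_mat 3 3 \<and> transpose_mat Q * Q = 1\<^sub>m 3 \<and> det Q = 1}"

text \<open>Measurements: Rm i is the measurement on edge (i, i+1) for i = 1..n-1,
  and Rm n is the measurement on edge (n, 1).  The reverse-direction
  measurements are the transposes.\<close>

text \<open>The 3x3 block (p,q) of the big matrix, with 0-based block indices
  p, q in 0..n-1 (block p corresponds to node p+1).\<close>
definition cycle_block :: "nat \<Rightarrow> (nat \<Rightarrow> real mat) \<Rightarrow> nat \<Rightarrow> nat \<Rightarrow> real mat" where
  "cycle_block n Rm p q =
     (if p = q then 1\<^sub>m 3
      else if q = (p + 1) mod n then Rm (p + 1)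
      else if p = (q + 1) mod n then transpose_mat (Rm (q + 1))
      else 0\<^sub>m 3 3)"

definition cycle_matrix :: "nat \<Rightarrow> (nat \<Rightarrow> real mat) \<Rightarrow> real mat" where
  "cycle_matrix n Rm = mat (3 * n) (3 * n)
     (\<lambda>(a, b). cycle_block n Rm (a div 3) (b div 3) $$ (a mod 3, b mod 3))"

definition cycle_error :: "nat \<Rightarrow> (nat \<Rightarrow> real mat) \<Rightarrow> real mat" where
  "cycle_error n Rm = foldl (*) (1\<^sub>m 3) (map Rm [1..<n+1])"

definition hat3 :: "real vec \<Rightarrow> real mat" where
  "hat3 v = mat_of_rows_list 3
     [[0, - (v $ 2), v $ 1],
      [v $ 2, 0, - (v $ 0)],
      [- (v $ 1), v $ 0, 0]]"

text \<open>exp(t [u]_x) for a unit axis u, written in closed (Rodrigues) form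
  I + sin t K + (1 - cos t) K^2, which equals the matrix exponential series.\<close>
definition rot_exp :: "real \<Rightarrow> real vec \<Rightarrow> real mat" where
  "rot_exp t u = 1\<^sub>m 3 + sin t \<cdot>\<^sub>m hat3 u + (1 - cos t) \<cdot>\<^sub>m (hat3 u * hat3 u)"

definition is_rotation_angle :: "real mat \<Rightarrow> real \<Rightarrow> bool" where
  "is_rotation_angle E \<gamma> \<longleftrightarrow> - pi \<le> \<gamma> \<and> \<gamma> \<le> pi \<and>
     (\<exists>u. u \<in> carrier_vec 3 \<and> (u $ 0)\<^sup>2 + (u $ 1)\<^sup>2 + (u $ 2)\<^sup>2 = 1 \<and> E = rot_exp \<gamma> u)"

end

theory Submission
  imports Defs
begin

definition cK :: "real vec \<Rightarrow> complex vec \<Rightarrow> complex vec" where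
 "cK u x = vec 3 (\<lambda>i. if i=0 then of_real(u$1)*x$2 - of_real(u$2)*x$1
    else if i=1 then of_real(u$2)*x$0 - of_real(u$0)*x$2
    else of_real(u$0)*x$1 - of_real(u$1)*x$0)"

lemma less3: "(i::nat) < 3 \<longleftrightarrow> i = 0 \<or> i = Suc 0 \<or> i = 2" by auto

lemma sum3: "(\<Sum>i\<in>{0..<3::nat}. f i) = f 0 + f 1 + f 2"
  by (simp add: numeral_3_eq_3 eval_nat_numeral)

lemma cK_carrier[simp]: "cK u x \<in> carrier_vec 3" "dim_vec (cK u x) = 3"
  by (auto simp: cK_def)

lemma cK_idx: "cK u x $ 0 = of_real(u$1)*x$2 - of_real(u$2)*x$1"
  "cK u x $ 1 = of_real(u$2)*x$0 - of_real(u$0)*x$2"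
  "cK u x $ 2 = of_real(u$0)*x$1 - of_real(u$1)*x$0"
  "cK u x $ Suc 0 = of_real(u$2)*x$0 - of_real(u$0)*x$2"
  by (auto simp: cK_def)

lemma hatK: assumes "x \<in> carrier_vec 3"
  shows "map_mat complex_of_real (hat3 u) *\<^sub>v x = cK u x"
  using assms
  by (intro eq_vecI) (auto simp: less3 cK_idx hat3_def mat_of_rows_list_def scalar_prod_def sum3 row_def)

lemma Emul: assumes "x \<in> carrier_vec 3"
  shows "map_mat complex_of_real (rot_exp g u) *\<^sub>v x
     = x + of_real(sin g) \<cdot>\<^sub>v cK u x + of_real(1 - cos g) \<cdot>\<^sub>v cK u (cK u x)"
  using assms
  by (intro eq_vecI) (auto simp: less3 cK_idx rot_exp_def hat3_def mat_of_rows_list_def scalar_prod_def sum3 row_def col_def algebra_simps)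

lemma cK_add: "x \<in> carrier_vec 3 \<Longrightarrow> y \<in> carrier_vec 3 \<Longrightarrow> cK u (x + y) = cK u x + cK u y"
  by (intro eq_vecI) (auto simp: less3 cK_idx algebra_simps)
lemma cK_minus: "x \<in> carrier_vec 3 \<Longrightarrow> y \<in> carrier_vec 3 \<Longrightarrow> cK u (x - y) = cK u x - cK u y"
  by (intro eq_vecI) (auto simp: less3 cK_idx algebra_simps)
lemma cK_smult: "x \<in> carrier_vec 3 \<Longrightarrow> cK u (c \<cdot>\<^sub>v x) = c \<cdot>\<^sub>v cK u x"
  by (intro eq_vecI) (auto simp: less3 cK_idx algebra_simps)

lemma cK3_gen: assumes "x \<in> carrier_vec 3"
  shows "cK u (cK u (cK u x)) = - (of_real ((u$0)\<^sup>2 + (u$1)\<^sup>2 + (u$2)\<^sup>2)) \<cdot>\<^sub>v cK u x"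
  apply (rule eq_vecI)
  apply (simp_all add: less3)
  apply (elim disjE)
  apply (simp_all only: cK_idx index_uminus_vec index_smult_vec cK_carrier)
  apply (simp_all add: power2_eq_square)
  apply (simp_all add: algebra_simps)
  done


lemma cK3: assumes "(u$0)\<^sup>2 + (u$1)\<^sup>2 + (u$2)\<^sup>2 = 1" and "x \<in> carrier_vec 3"
  shows "cK u (cK u (cK u x)) = - cK u x"
  using cK3_gen[OF assms(2), of u] unfolding assms(1) by (intro eq_vecI) auto

lemma cK_uminus: "x \<in> carrier_vec 3 \<Longrightarrow> cK u (- x) = - cK u x"
  by (intro eq_vecI) (auto simp: less3 cK_idx algebra_simps)

lemma vec3_eqI: assumes "x \<in> carrier_vec 3" "y \<in> carrier_vec 3"
  "x$0 = y$0" "x$1 = y$1" "x$2 = y$2" shows "x = y"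
  using assms by (intro eq_vecI) (auto simp: less3)

lemma E_ev_sub:
  assumes hu: "(u$0)\<^sup>2 + (u$1)\<^sup>2 + (u$2)\<^sup>2 = 1"
    and x: "x \<in> carrier_vec 3" and nz: "x \<noteq> 0\<^sub>v 3"
    and ev: "map_mat complex_of_real (rot_exp g u) *\<^sub>v x = c \<cdot>\<^sub>v x"
  shows "c = 1 \<or> c = cis g \<or> c = cis (-g)"
proof -
  define s where "s = complex_of_real (sin g)"
  define C where "C = complex_of_real (cos g)"
  define a where "a = cK u x"
  define b where "b = cK u a"
  have a: "a \<in> carrier_vec 3" and b: "b \<in> carrier_vec 3" unfolding a_def b_def by auto
  have Kb: "cK u b = - a" unfolding a_def b_def using cK3[OF hu x] .
  have e0: "x + s \<cdot>\<^sub>v a + (1 - C) \<cdot>\<^sub>v b = c \<cdot>\<^sub>v x"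
    using ev Emul[OF x, of g u] unfolding s_def C_def a_def b_def by simp
  have "cK u (x + s \<cdot>\<^sub>v a + (1 - C) \<cdot>\<^sub>v b) = cK u (c \<cdot>\<^sub>v x)" using e0 by simp
  hence e1: "a + s \<cdot>\<^sub>v b + (1 - C) \<cdot>\<^sub>v (- a) = c \<cdot>\<^sub>v a"
    using a b x by (simp add: cK_add cK_smult Kb a_def[symmetric] b_def[symmetric])
  have "cK u (a + s \<cdot>\<^sub>v b + (1 - C) \<cdot>\<^sub>v (- a)) = cK u (c \<cdot>\<^sub>v a)" using e1 by simp
  hence e2: "b + s \<cdot>\<^sub>v (- a) + (1 - C) \<cdot>\<^sub>v (- b) = c \<cdot>\<^sub>v b"
    using a b x by (simp add: cK_add cK_smult Kb cK_uminus b_def[symmetric])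
  have c0: "x$i + s * a$i + (1 - C) * b$i = c * x$i" if "i < 3" for i
    using arg_cong[OF e0, of "\<lambda>v. v$i"] that a b x by (simp add: add.assoc)
  have c1: "C * a$i + s * b$i = c * a$i" if "i < 3" for i
    using arg_cong[OF e1, of "\<lambda>v. v$i"] that a b x by (simp add: algebra_simps)
  have c2: "C * b$i - s * a$i = c * b$i" if "i < 3" for i
    using arg_cong[OF e2, of "\<lambda>v. v$i"] that a b x by (simp add: algebra_simps)
  show ?thesis
  proof (cases "a = 0\<^sub>v 3")
    case True
    hence "b = 0\<^sub>v 3" unfolding b_def by (intro eq_vecI) (auto simp: less3 cK_idx)
    with True c0 have "x$i = c * x$i" if "i < 3" for i using that by auto
    moreover obtain i where "i < 3" "x$i \<noteq> 0" using nz x by (metis eq_vecI carrier_vecD index_zero_vec(1,2))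
    ultimately have "c = 1" by (metis mult_cancel_right1)
    thus ?thesis by simp
  next
    case False
    then obtain j where j: "j < 3" "a$j \<noteq> 0" using a by (metis eq_vecI carrier_vecD index_zero_vec(1,2))
    have h1: "(C - c) * a$j = - s * b$j" using c1[OF j(1)] by (simp add: algebra_simps)
    have h2: "(C - c) * b$j = s * a$j" using c2[OF j(1)] by (simp add: algebra_simps)
    have "(C - c)^2 * a$j = (C-c) * ((C-c) * a$j)" by (simp add: power2_eq_square)
    also have "... = (C-c) * (- s * b$j)" using h1 by simp
    also have "... = - s * ((C-c) * b$j)" by (simp add: algebra_simps)
    also have "... = - s * (s * a$j)" using h2 by simp
    finally have "(C-c)^2 * a$j = - (s^2 * a$j)" by (simp add: power2_eq_square)
    hence "((C - c)^2 + s^2) * a$j = 0" by (simp add: algebra_simps)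
    hence "(C - c)^2 + s^2 = 0" using j by simp
    moreover have "(c - (C + \<i>*s)) * (c - (C - \<i>*s)) = (C - c)^2 + s^2"
      by (simp add: power2_eq_square algebra_simps)
    ultimately have "(c - (C + \<i> * s)) * (c - (C - \<i> * s)) = 0" by simp
    hence "c = C + \<i> * s \<or> c = C - \<i> * s" by auto
    moreover have "cis g = C + \<i> * s" "cis (-g) = C - \<i> * s"
      unfolding C_def s_def by (auto simp: complex_eq_iff)
    ultimately show ?thesis by auto
  qed
qed


lemma ring_id: fixes A B s C :: complex
  shows "(B - \<i>*A) + s*(-A - \<i>*B) + (1-C)*(-B + \<i>*A) = (C - \<i>*s)*(B - \<i>*A)"
  by (simp add: algebra_simps)

lemma E_ev_one:
  assumes hu: "(u$0)\<^sup>2 + (u$1)\<^sup>2 + (u$2)\<^sup>2 = 1" and u: "u \<in> carrier_vec 3"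
  shows "map_vec complex_of_real u \<in> carrier_vec 3"
    "map_vec complex_of_real u \<noteq> 0\<^sub>v 3"
    "map_mat complex_of_real (rot_exp g u) *\<^sub>v map_vec complex_of_real u = 1 \<cdot>\<^sub>v map_vec complex_of_real u"
proof -
  let ?x = "map_vec complex_of_real u"
  show x: "?x \<in> carrier_vec 3" using u by simp
  show "?x \<noteq> 0\<^sub>v 3"
  proof
    assume "?x = 0\<^sub>v 3"
    hence "?x $ i = 0" if "i < 3" for i using that by simp
    hence "u $ i = 0" if "i < 3" for i using that u by auto
    thus False using hu by simp
  qed
  have K0: "cK u ?x = 0\<^sub>v 3" using u by (intro eq_vecI) (auto simp: less3 cK_idx algebra_simps)
  have "cK u (0\<^sub>v 3) = 0\<^sub>v 3" by (intro eq_vecI) (auto simp: less3 cK_idx)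
  thus "map_mat complex_of_real (rot_exp g u) *\<^sub>v ?x = 1 \<cdot>\<^sub>v ?x"
    using Emul[OF x, of g u] K0 x by (simp, intro eq_vecI, auto)
qed

lemma E_ev_minus:
  assumes hu: "(u$0)\<^sup>2 + (u$1)\<^sup>2 + (u$2)\<^sup>2 = 1" and u: "u \<in> carrier_vec 3"
  shows "\<exists>z. z \<in> carrier_vec 3 \<and> z \<noteq> 0\<^sub>v 3 \<and>
     map_mat complex_of_real (rot_exp g u) *\<^sub>v z = cis (-g) \<cdot>\<^sub>v z"
proof -
  define zz where "zz w = cK u (cK u w) - \<i> \<cdot>\<^sub>v cK u w" for w
  have gen: "zz w \<in> carrier_vec 3 \<and> map_mat complex_of_real (rot_exp g u) *\<^sub>v zz w = cis (-g) \<cdot>\<^sub>v zz w"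
    if w: "w \<in> carrier_vec 3" for w
  proof -
    define a where "a = cK u w"
    define b where "b = cK u a"
    have a: "a \<in> carrier_vec 3" and b: "b \<in> carrier_vec 3" unfolding a_def b_def by auto
    have Kb: "cK u b = - a" unfolding a_def b_def using cK3[OF hu w] .
    have z: "zz w = b - \<i> \<cdot>\<^sub>v a" unfolding zz_def a_def b_def by simp
    have zc: "zz w \<in> carrier_vec 3" using z a b by simp
    have Kz: "cK u (zz w) = - a - \<i> \<cdot>\<^sub>v b" unfolding z using a b
      by (simp add: cK_minus cK_smult Kb b_def[symmetric])
    have KKz: "cK u (cK u (zz w)) = - b + \<i> \<cdot>\<^sub>v a" unfolding Kz using a b
      by (simp add: cK_minus cK_smult Kb cK_uminus b_def[symmetric]) (intro eq_vecI, simp_all)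
    have cm: "cis (-g) = of_real (cos g) - \<i> * of_real (sin g)" by (simp add: complex_eq_iff)
    have "map_mat complex_of_real (rot_exp g u) *\<^sub>v zz w = cis (-g) \<cdot>\<^sub>v zz w"
      unfolding Emul[OF zc] unfolding KKz unfolding Kz cm unfolding z using a b
      apply (intro eq_vecI)
      subgoal for j using ring_id[of "b$j" "a$j" "of_real (sin g)" "of_real (cos g)"] by (simp add: add.assoc)
      by simp
    with zc show ?thesis by simp
  qed
  have z0: "zz (unit_vec 3 0) $ 0 = - of_real ((u$1)\<^sup>2 + (u$2)\<^sup>2)"
    unfolding zz_def by (simp add: cK_idx power2_eq_square)
  have z1: "zz (unit_vec 3 1) $ 1 = - of_real ((u$0)\<^sup>2 + (u$2)\<^sup>2)"
    unfolding zz_def by (simp add: cK_idx power2_eq_square)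
  show ?thesis
  proof (cases "(u$1)\<^sup>2 + (u$2)\<^sup>2 = 0")
    case False
    have nz: "zz (unit_vec 3 0) $ 0 \<noteq> 0"
    proof (intro notI)
      assume a0: "zz (unit_vec 3 0) $ 0 = 0"
      have "complex_of_real ((u$1)\<^sup>2 + (u$2)\<^sup>2) = 0" using a0 unfolding z0 by (metis neg_equal_0_iff_equal)
      hence "(u$1)\<^sup>2 + (u$2)\<^sup>2 = 0" by (metis of_real_eq_0_iff)
      thus False using False by simp
    qed
    have "zz (unit_vec 3 0) \<noteq> 0\<^sub>v 3"
    proof
      assume "zz (unit_vec 3 0) = 0\<^sub>v 3"
      hence "zz (unit_vec 3 0) $ 0 = 0" by simp
      with nz show False by simp
    qed
    thus ?thesis using gen[of "unit_vec 3 0"] by auto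
  next
    case True
    have nz0: "(u$0)\<^sup>2 + (u$2)\<^sup>2 \<noteq> 0" using True hu by (metis add_nonneg_eq_0_iff zero_le_power2 add_0 zero_neq_one)
    have nz: "zz (unit_vec 3 1) $ 1 \<noteq> 0"
    proof (intro notI)
      assume a0: "zz (unit_vec 3 1) $ 1 = 0"
      have "complex_of_real ((u$0)\<^sup>2 + (u$2)\<^sup>2) = 0" using a0 unfolding z1 by (metis neg_equal_0_iff_equal)
      hence "(u$0)\<^sup>2 + (u$2)\<^sup>2 = 0" by (metis of_real_eq_0_iff)
      thus False using nz0 by simp
    qed
    have "zz (unit_vec 3 1) \<noteq> 0\<^sub>v 3"
    proof
      assume "zz (unit_vec 3 1) = 0\<^sub>v 3"
      hence "zz (unit_vec 3 1) $ 1 = 0" by simp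
      with nz show False by simp
    qed
    thus ?thesis using gen[of "unit_vec 3 1"] by auto
  qed
qed


lemma sum_blocks: fixes f :: "nat \<Rightarrow> 'a::comm_monoid_add" and m :: nat
  shows "(\<Sum>a<3*m. f a) = (\<Sum>q<m. f(3*q) + f(3*q+1) + f(3*q+2))"
proof (induction m)
  case (Suc m)
  have "{..<3 * Suc m} = {..<3*m} \<union> {3*m, 3*m+1, 3*m+2}" by auto
  hence "(\<Sum>a<3 * Suc m. f a) = (\<Sum>a<3*m. f a) + (f(3*m) + f(3*m+1) + f(3*m+2))"
    by (simp add: sum.union_disjoint add_ac)
  thus ?case using Suc by simp
qed simp

lemma mv3: assumes "A \<in> carrier_mat 3 3" "i < 3" "w \<in> carrier_vec 3"
  shows "(A *\<^sub>v w) $ i = A $$ (i,0) * w$0 + A $$ (i,1) * w$1 + A $$ (i,2) * w$2"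
  using assms by (simp add: scalar_prod_def sum3 row_def)

locale cyc =
  fixes n :: nat and Rm :: "nat \<Rightarrow> real mat"
  assumes n3: "n \<ge> 3" and so: "\<And>i. i \<in> {1..n} \<Longrightarrow> Rm i \<in> SO3"
begin

definition R :: "nat \<Rightarrow> complex mat" where "R p = map_mat complex_of_real (Rm (p+1))"
definition sc :: "nat \<Rightarrow> nat" where "sc p = (p+1) mod n"
definition pr :: "nat \<Rightarrow> nat" where "pr p = (p + n - 1) mod n"

lemma Rm_carrier: "i \<in> {1..n} \<Longrightarrow> Rm i \<in> carrier_mat 3 3"
  using so unfolding SO3_def by auto

lemma R_props: assumes "p < n"
  shows "R p \<in> carrier_mat 3 3" "transpose_mat (R p) * R p = 1\<^sub>m 3" "R p * transpose_mat (R p) = 1\<^sub>m 3"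
proof -
  have s: "Rm (p+1) \<in> SO3" using so assms by auto
  hence c: "Rm (p+1) \<in> carrier_mat 3 3" and o: "transpose_mat (Rm (p+1)) * Rm (p+1) = 1\<^sub>m 3"
    unfolding SO3_def by auto
  show rc: "R p \<in> carrier_mat 3 3" unfolding R_def using c by simp
  have "transpose_mat (R p) * R p = map_mat complex_of_real (transpose_mat (Rm (p+1)) * Rm (p+1))"
    unfolding R_def map_mat_transpose using c by (simp add: of_real_hom.mat_hom_mult)
  also have "\<dots> = 1\<^sub>m 3" unfolding o by (simp add: of_real_hom.mat_hom_one)
  finally show tt: "transpose_mat (R p) * R p = 1\<^sub>m 3" .
  show "R p * transpose_mat (R p) = 1\<^sub>m 3"
    using mat_mult_left_right_inverse[OF _ rc tt] rc by simp
qed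

lemma sc_lt: "sc p < n" unfolding sc_def using n3 by simp
lemma pr_lt: "pr p < n" unfolding pr_def using n3 by simp

lemma sc_eq: "p < n \<Longrightarrow> sc p = (if p + 1 = n then 0 else p + 1)"
  unfolding sc_def by auto
lemma pr_eq: "p < n \<Longrightarrow> pr p = (if p = 0 then n - 1 else p - 1)"
  unfolding pr_def using n3
  by (cases "p = 0") (auto simp: mod_if)

lemma pr_sc: "p < n \<Longrightarrow> pr (sc p) = p"
  using n3 by (auto simp: sc_eq pr_eq)
lemma sc_pr: "p < n \<Longrightarrow> sc (pr p) = p"
  using n3 by (auto simp: sc_eq pr_eq)
lemma dist: assumes "p < n" shows "sc p \<noteq> p" "pr p \<noteq> p" "sc p \<noteq> pr p"
  using assms n3 by (auto simp: sc_eq pr_eq split: if_splits)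


definition CM :: "complex mat" where "CM = map_mat complex_of_real (cycle_matrix n Rm)"
definition blk :: "complex vec \<Rightarrow> nat \<Rightarrow> complex vec" where "blk v p = vec 3 (\<lambda>i. v $ (3*p+i))"

lemma blk_carrier[simp]: "blk v p \<in> carrier_vec 3" "dim_vec (blk v p) = 3"
  by (auto simp: blk_def)

lemma CM_carrier: "CM \<in> carrier_mat (3*n) (3*n)" by (simp add: CM_def cycle_matrix_def)

lemma cb_carrier: assumes "p < n" "q < n" shows "cycle_block n Rm p q \<in> carrier_mat 3 3"
proof -
  have "Rm (p+1) \<in> carrier_mat 3 3" "Rm (q+1) \<in> carrier_mat 3 3" using Rm_carrier assms by auto
  thus ?thesis unfolding cycle_block_def by auto
qed

lemma cb_vals: assumes p: "p < n"
  shows "cycle_block n Rm p p = 1\<^sub>m 3"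
    "cycle_block n Rm p (sc p) = Rm (p+1)"
    "cycle_block n Rm p (pr p) = transpose_mat (Rm (pr p + 1))"
    "q < n \<Longrightarrow> q \<noteq> p \<Longrightarrow> q \<noteq> sc p \<Longrightarrow> q \<noteq> pr p \<Longrightarrow> cycle_block n Rm p q = 0\<^sub>m 3 3"
proof -
  show "cycle_block n Rm p p = 1\<^sub>m 3" unfolding cycle_block_def by simp
  show "cycle_block n Rm p (sc p) = Rm (p+1)" unfolding cycle_block_def using dist[OF p]
    by (simp add: sc_def)
  have "pr p \<noteq> (p + 1) mod n" using dist[OF p] by (simp add: sc_def)
  moreover have "p = (pr p + 1) mod n" using sc_pr[OF p] by (simp add: sc_def)
  ultimately show "cycle_block n Rm p (pr p) = transpose_mat (Rm (pr p + 1))"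
    unfolding cycle_block_def using dist[OF p] by auto
  assume q: "q < n" "q \<noteq> p" "q \<noteq> sc p" "q \<noteq> pr p"
  have "p \<noteq> (q + 1) mod n"
  proof
    assume "p = (q + 1) mod n"
    hence "pr p = q" using pr_sc[OF q(1)] by (simp add: sc_def)
    thus False using q by simp
  qed
  thus "cycle_block n Rm p q = 0\<^sub>m 3 3" unfolding cycle_block_def using q by (simp add: sc_def)
qed

lemma block_mult: assumes v: "v \<in> carrier_vec (3*n)" and p: "p < n"
  shows "blk (CM *\<^sub>v v) p = blk v p + R p *\<^sub>v blk v (sc p) + transpose_mat (R (pr p)) *\<^sub>v blk v (pr p)"
proof -
  have Rc: "R p \<in> carrier_mat 3 3" "R (pr p) \<in> carrier_mat 3 3" using R_props pr_lt p by auto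
  define T where "T q = map_mat complex_of_real (cycle_block n Rm p q)" for q
  define g where "g q = (T q *\<^sub>v blk v q)" for q
  have main: "(CM *\<^sub>v v) $ (3*p+i) = g p $ i + g (sc p) $ i + g (pr p) $ i" if i: "i < 3" for i
  proof -
    define f where "f a = CM $$ (3*p+i, a) * v $ a" for a
    have "(CM *\<^sub>v v) $ (3*p+i) = (\<Sum>a<3*n. f a)"
      using CM_carrier v p i unfolding f_def
      by (simp add: scalar_prod_def atLeast0LessThan)
    also have "\<dots> = (\<Sum>q<n. f(3*q) + f(3*q+1) + f(3*q+2))" by (rule sum_blocks)
    also have "\<dots> = (\<Sum>q<n. g q $ i)"
    proof (rule sum.cong[OF refl])
      fix q assume "q \<in> {..<n}"
      hence q: "q < n" by simp
      have Tc: "T q \<in> carrier_mat 3 3" unfolding T_def using cb_carrier[OF p q] by simp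
      have "3*p+i < 3*n" "3*q < 3*n" "3*q+1 < 3*n" "3*q+2 < 3*n" using p q i by auto
      moreover have "Suc (3*q) div 3 = q" "Suc (3*q) mod 3 = 1" "Suc (Suc (3*q)) div 3 = q"
        "Suc (Suc (3*q)) mod 3 = 2" "(3*p+i) div 3 = p" "(3*p+i) mod 3 = i" using i by presburger+
      ultimately show "f(3*q) + f(3*q+1) + f(3*q+2) = g q $ i"
        unfolding g_def f_def mv3[OF Tc i blk_carrier(1)] using i
        by (simp add: CM_def cycle_matrix_def T_def blk_def carrier_matD[OF cb_carrier[OF p q]])
    qed
    also have "\<dots> = (\<Sum>q\<in>{p, sc p, pr p}. g q $ i)"
    proof (rule sum.mono_neutral_right)
      show "{p, sc p, pr p} \<subseteq> {..<n}" using p sc_lt pr_lt by auto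
      show "\<forall>q\<in>{..<n} - {p, sc p, pr p}. g q $ i = 0"
      proof
        fix q assume "q \<in> {..<n} - {p, sc p, pr p}"
        hence "cycle_block n Rm p q = 0\<^sub>m 3 3" using cb_vals(4)[OF p] by auto
        hence "T q = 0\<^sub>m 3 3" unfolding T_def by (intro eq_matI) auto
        thus "g q $ i = 0" unfolding g_def using i by (simp add: mv3)
      qed
    qed simp
    also have "\<dots> = g p $ i + g (sc p) $ i + g (pr p) $ i"
      using dist[OF p] by (simp add: add.assoc)
    finally show ?thesis .
  qed
  have gp: "g p = blk v p" unfolding g_def T_def cb_vals(1)[OF p] by (simp add: of_real_hom.mat_hom_one)
  have gs: "g (sc p) = R p *\<^sub>v blk v (sc p)" unfolding g_def T_def cb_vals(2)[OF p] R_def by simp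
  have gr: "g (pr p) = transpose_mat (R (pr p)) *\<^sub>v blk v (pr p)"
    unfolding g_def T_def cb_vals(3)[OF p] R_def map_mat_transpose by simp
  show ?thesis
  proof (rule eq_vecI)
    fix i assume "i < dim_vec (blk v p + R p *\<^sub>v blk v (sc p) + transpose_mat (R (pr p)) *\<^sub>v blk v (pr p))"
    hence i: "i < 3" using Rc by simp
    have "blk (CM *\<^sub>v v) p $ i = (CM *\<^sub>v v) $ (3*p+i)" unfolding blk_def using i by simp
    also have "\<dots> = g p $ i + g (sc p) $ i + g (pr p) $ i" by (rule main[OF i])
    finally show "blk (CM *\<^sub>v v) p $ i = (blk v p + R p *\<^sub>v blk v (sc p) + transpose_mat (R (pr p)) *\<^sub>v blk v (pr p)) $ i"
      unfolding gp gs gr using i Rc by simp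
  qed (use Rc in \<open>simp add: blk_def\<close>)
qed


lemma blk_idx: assumes "a < 3*n" shows "w $ a = blk w (a div 3) $ (a mod 3)"
  unfolding blk_def by simp

lemma blk_smult: assumes "v \<in> carrier_vec (3*n)" "p < n" shows "blk (c \<cdot>\<^sub>v v) p = c \<cdot>\<^sub>v blk v p"
  using assms by (intro eq_vecI) (auto simp: blk_def)

lemma eig_iff: assumes v: "v \<in> carrier_vec (3*n)"
  shows "(CM *\<^sub>v v = l \<cdot>\<^sub>v v) \<longleftrightarrow>
    (\<forall>p<n. blk v p + R p *\<^sub>v blk v (sc p) + transpose_mat (R (pr p)) *\<^sub>v blk v (pr p) = l \<cdot>\<^sub>v blk v p)"
proof
  assume e: "CM *\<^sub>v v = l \<cdot>\<^sub>v v"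
  show "\<forall>p<n. blk v p + R p *\<^sub>v blk v (sc p) + transpose_mat (R (pr p)) *\<^sub>v blk v (pr p) = l \<cdot>\<^sub>v blk v p"
    using block_mult[OF v] blk_smult[OF v] e by metis
next
  assume h: "\<forall>p<n. blk v p + R p *\<^sub>v blk v (sc p) + transpose_mat (R (pr p)) *\<^sub>v blk v (pr p) = l \<cdot>\<^sub>v blk v p"
  show "CM *\<^sub>v v = l \<cdot>\<^sub>v v"
  proof (rule eq_vecI)
    fix a assume "a < dim_vec (l \<cdot>\<^sub>v v)"
    hence a: "a < 3*n" using v by simp
    have p: "a div 3 < n" using a by simp
    have "(CM *\<^sub>v v) $ a = blk (CM *\<^sub>v v) (a div 3) $ (a mod 3)" by (rule blk_idx[OF a])
    also have "\<dots> = (l \<cdot>\<^sub>v blk v (a div 3)) $ (a mod 3)"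
      unfolding block_mult[OF v p] using h p by simp
    also have "\<dots> = (l \<cdot>\<^sub>v v) $ a" using a v by (simp add: blk_def)
    finally show "(CM *\<^sub>v v) $ a = (l \<cdot>\<^sub>v v) $ a" .
  qed (use v CM_carrier in auto)
qed

lemma nz_blk: assumes v: "v \<in> carrier_vec (3*n)" "v \<noteq> 0\<^sub>v (3*n)" shows "\<exists>p<n. blk v p \<noteq> 0\<^sub>v 3"
proof (rule ccontr)
  assume "\<not> ?thesis"
  hence h: "\<forall>p<n. blk v p = 0\<^sub>v 3" by simp
  have "v = 0\<^sub>v (3*n)"
  proof (rule eq_vecI)
    fix a assume "a < dim_vec (0\<^sub>v (3*n))"
    hence a: "a < 3*n" by simp
    have "v $ a = blk v (a div 3) $ (a mod 3)" by (rule blk_idx[OF a])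
    thus "v $ a = 0\<^sub>v (3*n) $ a" using h a by simp
  qed (use v in auto)
  thus False using v by simp
qed

definition ub :: "(nat \<Rightarrow> complex vec) \<Rightarrow> complex vec" where
  "ub x = vec (3*n) (\<lambda>a. x (a div 3) $ (a mod 3))"

lemma ub_carrier: "ub x \<in> carrier_vec (3*n)" by (simp add: ub_def)

lemma blk_ub: assumes "p < n" "x p \<in> carrier_vec 3" shows "blk (ub x) p = x p"
proof (rule eq_vecI)
  fix i assume "i < dim_vec (x p)"
  hence i: "i < 3" using assms by simp
  have "3*p+i < 3*n" using i assms by simp
  moreover have "(3*p+i) div 3 = p" "(3*p+i) mod 3 = i" using i by presburger+
  ultimately show "blk (ub x) p $ i = x p $ i" unfolding blk_def ub_def using i by simp
qed (use assms in simp)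

primrec Gc :: "nat \<Rightarrow> complex mat" where
  "Gc 0 = 1\<^sub>m 3" | "Gc (Suc k) = Gc k * R k"

lemma Gc_props: "k \<le> n \<Longrightarrow> Gc k \<in> carrier_mat 3 3 \<and> transpose_mat (Gc k) * Gc k = 1\<^sub>m 3 \<and> Gc k * transpose_mat (Gc k) = 1\<^sub>m 3"
proof (induction k)
  case 0 thus ?case by simp
next
  case (Suc k)
  hence k: "k < n" by simp
  from Suc k have G: "Gc k \<in> carrier_mat 3 3" "transpose_mat (Gc k) * Gc k = 1\<^sub>m 3" by auto
  note Rp = R_props[OF k]
  have c: "Gc (Suc k) \<in> carrier_mat 3 3" using G Rp by simp
  have a1: "transpose_mat (Gc k) * (Gc k * R k) = (transpose_mat (Gc k) * Gc k) * R k"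
    by (rule assoc_mult_mat[symmetric]) (use G Rp in auto)
  have t1: "transpose_mat (Gc (Suc k)) = transpose_mat (R k) * transpose_mat (Gc k)"
    using G Rp by (simp add: transpose_mult)
  have "transpose_mat (Gc (Suc k)) * Gc (Suc k) = transpose_mat (R k) * transpose_mat (Gc k) * (Gc k * R k)"
    unfolding t1 by simp
  also have "\<dots> = transpose_mat (R k) * (transpose_mat (Gc k) * (Gc k * R k))"
    by (rule assoc_mult_mat) (use G Rp in auto)
  also have "\<dots> = 1\<^sub>m 3" unfolding a1 using G Rp by simp
  finally have t: "transpose_mat (Gc (Suc k)) * Gc (Suc k) = 1\<^sub>m 3" .
  have "Gc (Suc k) * transpose_mat (Gc (Suc k)) = 1\<^sub>m 3"
    using mat_mult_left_right_inverse[OF _ c t] c by simp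
  with c t show ?case by simp
qed

lemma E_Gc: "map_mat complex_of_real (cycle_error n Rm) = Gc n"
proof -
  have "k \<le> n \<Longrightarrow> foldl (*) (1\<^sub>m 3) (map Rm [1..<k+1]) \<in> carrier_mat 3 3 \<and>
      map_mat complex_of_real (foldl (*) (1\<^sub>m 3) (map Rm [1..<k+1])) = Gc k" for k
  proof (induction k)
    case 0 thus ?case by (simp add: of_real_hom.mat_hom_one)
  next
    case (Suc k)
    hence k: "k < n" and IH: "foldl (*) (1\<^sub>m 3) (map Rm [1..<k+1]) \<in> carrier_mat 3 3"
      "map_mat complex_of_real (foldl (*) (1\<^sub>m 3) (map Rm [1..<k+1])) = Gc k" by auto
    have r: "Rm (k+1) \<in> carrier_mat 3 3" using Rm_carrier k by simp
    have l: "[1..<Suc k + 1] = [1..<k+1] @ [k+1]" by simp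
    show ?case unfolding l using IH r
      by (simp add: of_real_hom.mat_hom_mult R_def)
  qed
  thus ?thesis unfolding cycle_error_def by simp
qed


lemma RTR: assumes p: "p < n" and x: "x \<in> carrier_vec 3"
  shows "transpose_mat (R p) *\<^sub>v (R p *\<^sub>v x) = x" "R p *\<^sub>v (transpose_mat (R p) *\<^sub>v x) = x"
proof -
  note Rp = R_props[OF p]
  have "transpose_mat (R p) *\<^sub>v (R p *\<^sub>v x) = (transpose_mat (R p) * R p) *\<^sub>v x"
    by (rule assoc_mult_mat_vec[symmetric]) (use Rp x in auto)
  thus "transpose_mat (R p) *\<^sub>v (R p *\<^sub>v x) = x" using Rp x by simp
  have "R p *\<^sub>v (transpose_mat (R p) *\<^sub>v x) = (R p * transpose_mat (R p)) *\<^sub>v x"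
    by (rule assoc_mult_mat_vec[symmetric]) (use Rp x in auto)
  thus "R p *\<^sub>v (transpose_mat (R p) *\<^sub>v x) = x" using Rp x by simp
qed

lemma mv_zero: "A \<in> carrier_mat 3 3 \<Longrightarrow> A *\<^sub>v 0\<^sub>v 3 = (0\<^sub>v 3 :: complex vec)"
  by (intro eq_vecI) auto

lemma P_eig_E: assumes z: "\<And>p. p < n \<Longrightarrow> z p \<in> carrier_vec 3" and nz: "\<exists>p<n. z p \<noteq> 0\<^sub>v 3"
  and nu: "\<kappa> \<noteq> 0" and P: "\<And>p. p < n \<Longrightarrow> R p *\<^sub>v z (sc p) = \<kappa> \<cdot>\<^sub>v z p"
  shows "z 0 \<noteq> 0\<^sub>v 3 \<and> Gc n *\<^sub>v z 0 = \<kappa>^n \<cdot>\<^sub>v z 0"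
proof -
  have hback: "z (sc p) = \<kappa> \<cdot>\<^sub>v (transpose_mat (R p) *\<^sub>v z p)" if p: "p < n" for p
  proof -
    have "z (sc p) = transpose_mat (R p) *\<^sub>v (R p *\<^sub>v z (sc p))" using RTR(1)[OF p z[OF sc_lt]] by simp
    also have "\<dots> = transpose_mat (R p) *\<^sub>v (\<kappa> \<cdot>\<^sub>v z p)" using P[OF p] by simp
    also have "\<dots> = \<kappa> \<cdot>\<^sub>v (transpose_mat (R p) *\<^sub>v z p)"
      by (rule mult_mat_vec) (use R_props[OF p] z[OF p] in auto)
    finally show ?thesis .
  qed
  have z0: "z 0 \<noteq> 0\<^sub>v 3"
  proof
    assume h: "z 0 = 0\<^sub>v 3"
    have "p < n \<Longrightarrow> z p = 0\<^sub>v 3" for p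
    proof (induction p)
      case 0 show ?case using h .
    next
      case (Suc p)
      hence p: "p < n" by simp
      have "sc p = Suc p" using Suc.prems by (simp add: sc_def)
      hence "z (Suc p) = \<kappa> \<cdot>\<^sub>v (transpose_mat (R p) *\<^sub>v z p)" using hback[OF p] by simp
      also have "\<dots> = 0\<^sub>v 3" using Suc.IH[OF p] mv_zero[of "transpose_mat (R p)"] R_props[OF p]
        by (simp, intro eq_vecI, auto)
      finally show ?case .
    qed
    thus False using nz by auto
  qed
  have iter: "k \<le> n \<Longrightarrow> z 0 = (1/\<kappa>)^k \<cdot>\<^sub>v (Gc k *\<^sub>v z (k mod n))" for k
  proof (induction k)
    case 0 thus ?case using z[of 0] n3 by simp
  next
    case (Suc k)
    hence k: "k < n" by simp
    have kk: "k mod n = k" using k by simp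
    have Gk: "Gc k \<in> carrier_mat 3 3" using Gc_props k by simp
    note Rk = R_props[OF k]
    have zs: "z (sc k) \<in> carrier_vec 3" using z sc_lt by simp
    have zk: "z k = (1/\<kappa>) \<cdot>\<^sub>v (R k *\<^sub>v z (sc k))"
      unfolding P[OF k] smult_smult_assoc using nu by simp
    have "z 0 = (1/\<kappa>)^k \<cdot>\<^sub>v (Gc k *\<^sub>v z k)" using Suc kk by simp
    also have "\<dots> = (1/\<kappa>)^k \<cdot>\<^sub>v (Gc k *\<^sub>v ((1/\<kappa>) \<cdot>\<^sub>v (R k *\<^sub>v z (sc k))))" using zk by simp
    also have "\<dots> = (1/\<kappa>)^k \<cdot>\<^sub>v ((1/\<kappa>) \<cdot>\<^sub>v (Gc k *\<^sub>v (R k *\<^sub>v z (sc k))))"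
      using mult_mat_vec[OF Gk, of "R k *\<^sub>v z (sc k)" "1/\<kappa>"] Rk zs by simp
    also have "\<dots> = (1/\<kappa>)^(Suc k) \<cdot>\<^sub>v ((Gc k * R k) *\<^sub>v z (sc k))"
      unfolding smult_smult_assoc using Gk Rk zs by (simp add: mult.commute)
    also have "sc k = Suc k mod n" by (simp add: sc_def)
    finally show ?case by simp
  qed
  have "z 0 = (1/\<kappa>)^n \<cdot>\<^sub>v (Gc n *\<^sub>v z 0)" using iter[of n] by simp
  hence "\<kappa>^n \<cdot>\<^sub>v z 0 = (\<kappa>^n * (1/\<kappa>)^n) \<cdot>\<^sub>v (Gc n *\<^sub>v z 0)" by (metis smult_smult_assoc)
  also have "\<kappa>^n * (1/\<kappa>)^n = 1" using nu by (simp add: power_mult_distrib[symmetric])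
  finally show ?thesis using z0 by simp
qed

lemma Q_from_P: assumes z: "\<And>p. p < n \<Longrightarrow> z p \<in> carrier_vec 3"
  and nu: "\<kappa> \<noteq> 0" and P: "\<And>p. p < n \<Longrightarrow> R p *\<^sub>v z (sc p) = \<kappa> \<cdot>\<^sub>v z p" and p: "p < n"
  shows "transpose_mat (R (pr p)) *\<^sub>v z (pr p) = (1/\<kappa>) \<cdot>\<^sub>v z p"
proof -
  have q: "pr p < n" by (rule pr_lt)
  have "R (pr p) *\<^sub>v z p = \<kappa> \<cdot>\<^sub>v z (pr p)" using P[OF q] sc_pr[OF p] by simp
  hence "z (pr p) = (1/\<kappa>) \<cdot>\<^sub>v (R (pr p) *\<^sub>v z p)" using nu by (simp add: smult_smult_assoc)
  hence "transpose_mat (R (pr p)) *\<^sub>v z (pr p) = transpose_mat (R (pr p)) *\<^sub>v ((1/\<kappa>) \<cdot>\<^sub>v (R (pr p) *\<^sub>v z p))" by simp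
  also have "\<dots> = (1/\<kappa>) \<cdot>\<^sub>v (transpose_mat (R (pr p)) *\<^sub>v (R (pr p) *\<^sub>v z p))"
    by (rule mult_mat_vec) (use R_props[OF q] z[OF p] in auto)
  also have "\<dots> = (1/\<kappa>) \<cdot>\<^sub>v z p" using RTR(1)[OF q z[OF p]] by simp
  finally show ?thesis .
qed


lemma eq_from_PQ: fixes x :: "complex vec" assumes x: "x \<in> carrier_vec 3"
  shows "x + \<kappa> \<cdot>\<^sub>v x + (1/\<kappa>) \<cdot>\<^sub>v x = (1 + \<kappa> + 1/\<kappa>) \<cdot>\<^sub>v x"
proof (intro eq_vecI)
  fix i assume i: "i < dim_vec ((1 + \<kappa> + 1/\<kappa>) \<cdot>\<^sub>v x)"
  have aux: "(a::complex) + b*a + c*a = (1+b+c)*a" for a b c by (simp add: algebra_simps)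
  show "(x + \<kappa> \<cdot>\<^sub>v x + (1/\<kappa>) \<cdot>\<^sub>v x) $ i = ((1 + \<kappa> + 1/\<kappa>) \<cdot>\<^sub>v x) $ i"
    using x i aux[of "x$i" \<kappa> "1/\<kappa>"] by (simp add: add.assoc)
qed (use x in simp)

lemma construct: assumes w: "w \<in> carrier_vec 3" "w \<noteq> 0\<^sub>v 3" and E: "Gc n *\<^sub>v w = \<kappa>^n \<cdot>\<^sub>v w"
  and nu: "\<kappa> \<noteq> 0"
  shows "eigenvalue CM (1 + \<kappa> + 1/\<kappa>)"
proof -
  define z where "z p = \<kappa>^p \<cdot>\<^sub>v (transpose_mat (Gc p) *\<^sub>v w)" for p
  have zc: "z p \<in> carrier_vec 3" if "p \<le> n" for p
  proof -
    have "Gc p \<in> carrier_mat 3 3" using Gc_props[OF that] by simp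
    thus ?thesis using w unfolding z_def by simp
  qed
  have z0: "z 0 = w" unfolding z_def using w by simp
  have P: "R p *\<^sub>v z (sc p) = \<kappa> \<cdot>\<^sub>v z p" if p: "p < n" for p
  proof -
    note Rp = R_props[OF p]
    have Gp: "Gc p \<in> carrier_mat 3 3" using Gc_props p by simp
    have GTw: "transpose_mat (Gc p) *\<^sub>v w \<in> carrier_vec 3" using Gp w by simp
    show ?thesis
    proof (cases "p + 1 = n")
      case False
      hence s: "sc p = Suc p" using p by (simp add: sc_eq)
      have "transpose_mat (Gc (Suc p)) = transpose_mat (R p) * transpose_mat (Gc p)"
        using Gp Rp by (simp add: transpose_mult)
      hence "transpose_mat (Gc (Suc p)) *\<^sub>v w = transpose_mat (R p) *\<^sub>v (transpose_mat (Gc p) *\<^sub>v w)"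
        using Gp Rp w by simp
      hence "R p *\<^sub>v (transpose_mat (Gc (Suc p)) *\<^sub>v w) = transpose_mat (Gc p) *\<^sub>v w"
        using RTR(2)[OF p GTw] by simp
      moreover have GS: "Gc (Suc p) \<in> carrier_mat 3 3" using Gc_props[of "Suc p"] p False by simp
      moreover have "transpose_mat (Gc (Suc p)) *\<^sub>v w \<in> carrier_vec 3"
        by (rule mult_mat_vec_carrier[OF transpose_carrier_mat[THEN iffD2, OF GS] w(1)])
      ultimately have "R p *\<^sub>v z (sc p) = \<kappa>^(Suc p) \<cdot>\<^sub>v (transpose_mat (Gc p) *\<^sub>v w)"
        unfolding s z_def
        using mult_mat_vec[of "R p" 3 3 "transpose_mat (Gc (Suc p)) *\<^sub>v w" "\<kappa>^Suc p"] Rp Gc_props[of "Suc p"] p False w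
        by simp
      thus ?thesis unfolding z_def smult_smult_assoc by simp
    next
      case True
      hence s: "sc p = 0" using p by (simp add: sc_eq)
      have Gn: "Gc n = Gc p * R p" using True by (metis Gc.simps(2) Suc_eq_plus1)
      have "transpose_mat (Gc p) *\<^sub>v (Gc n *\<^sub>v w) = (transpose_mat (Gc p) * Gc p) *\<^sub>v (R p *\<^sub>v w)"
        unfolding Gn using Gp Rp w by simp
      also have "\<dots> = R p *\<^sub>v w" using Gc_props p Rp w by simp
      finally have "R p *\<^sub>v w = transpose_mat (Gc p) *\<^sub>v (\<kappa>^n \<cdot>\<^sub>v w)" unfolding E by simp
      also have "\<dots> = \<kappa>^n \<cdot>\<^sub>v (transpose_mat (Gc p) *\<^sub>v w)"
        by (rule mult_mat_vec) (use Gp w in auto)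
      finally have "R p *\<^sub>v z (sc p) = \<kappa>^n \<cdot>\<^sub>v (transpose_mat (Gc p) *\<^sub>v w)" unfolding s z0 .
      moreover have "n = Suc p" using True by simp
      ultimately show ?thesis unfolding z_def smult_smult_assoc by simp
    qed
  qed
  have zc': "\<And>p. p < n \<Longrightarrow> z p \<in> carrier_vec 3" using zc by simp
  define v where "v = ub z"
  have bv: "blk v p = z p" if "p < n" for p unfolding v_def using blk_ub that zc' by simp
  have vc: "v \<in> carrier_vec (3*n)" unfolding v_def by (rule ub_carrier)
  have "CM *\<^sub>v v = (1 + \<kappa> + 1/\<kappa>) \<cdot>\<^sub>v v"
    unfolding eig_iff[OF vc]
  proof (intro allI impI)
    fix p assume p: "p < n"
    have Q: "transpose_mat (R (pr p)) *\<^sub>v z (pr p) = (1/\<kappa>) \<cdot>\<^sub>v z p"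
      by (rule Q_from_P[OF zc' nu P p])
    show "blk v p + R p *\<^sub>v blk v (sc p) + transpose_mat (R (pr p)) *\<^sub>v blk v (pr p) = (1 + \<kappa> + 1/\<kappa>) \<cdot>\<^sub>v blk v p"
      unfolding bv[OF p] bv[OF sc_lt] bv[OF pr_lt] P[OF p] Q
      by (rule eq_from_PQ[OF zc'[OF p]])
  qed
  moreover have "v \<noteq> 0\<^sub>v (3*n)"
  proof
    assume "v = 0\<^sub>v (3*n)"
    hence "blk v 0 = 0\<^sub>v 3" unfolding blk_def using n3 by (intro eq_vecI) auto
    thus False using bv[of 0] n3 z0 w by simp
  qed
  ultimately show ?thesis unfolding eigenvalue_def eigenvector_def using vc CM_carrier by auto
qed


lemma vec_solve: fixes a b c d :: "complex vec"
  assumes "a \<in> carrier_vec 3" "b \<in> carrier_vec 3" "c \<in> carrier_vec 3" "d \<in> carrier_vec 3"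
    "a + b + c = d"
  shows "b = d - a - c"
proof (intro eq_vecI)
  fix i assume "i < dim_vec (d - a - c)"
  hence i: "i < 3" using assms by simp
  have "(a + b + c) $ i = d $ i" by (simp only: assms(5))
  thus "b $ i = (d - a - c) $ i" using assms(1-4) i by (simp add: algebra_simps)
qed (use assms in simp)

lemma sub: assumes "eigenvalue CM l"
  shows "\<exists>\<kappa> w. \<kappa> \<noteq> 0 \<and> l = 1 + \<kappa> + 1/\<kappa> \<and> w \<in> carrier_vec 3 \<and> w \<noteq> 0\<^sub>v 3 \<and> Gc n *\<^sub>v w = \<kappa>^n \<cdot>\<^sub>v w"
proof -
  obtain v where v: "v \<in> carrier_vec (3*n)" "v \<noteq> 0\<^sub>v (3*n)" "CM *\<^sub>v v = l \<cdot>\<^sub>v v"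
    using assms CM_carrier unfolding eigenvalue_def eigenvector_def by auto
  define x where "x = blk v"
  have xc: "\<And>p. x p \<in> carrier_vec 3" unfolding x_def by simp
  have eq: "x p + R p *\<^sub>v x (sc p) + transpose_mat (R (pr p)) *\<^sub>v x (pr p) = l \<cdot>\<^sub>v x p" if "p < n" for p
    using eig_iff[OF v(1)] v(3) that unfolding x_def by blast
  have xnz: "\<exists>p<n. x p \<noteq> 0\<^sub>v 3" using nz_blk[OF v(1,2)] unfolding x_def .
  define c where "c = csqrt ((l-1)^2 - 4)"
  have c2: "c * c = (l-1)^2 - 4" unfolding c_def by (metis power2_csqrt power2_eq_square)
  define \<mu> where "\<mu> = ((l - 1) + c) / 2"
  have quad: "\<mu> * \<mu> - (l-1) * \<mu> + 1 = 0"
  proof -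
    have "4 * (\<mu> * \<mu> - (l-1) * \<mu> + 1) = c * c - (l-1)^2 + 4"
      unfolding \<mu>_def by (simp add: field_simps power2_eq_square)
    also have "\<dots> = 0" unfolding c2 by simp
    finally show ?thesis by (metis mult_eq_0_iff zero_neq_numeral)
  qed
  have m0: "\<mu> \<noteq> 0" using quad by auto
  define \<mu>' where "\<mu>' = 1 / \<mu>"
  have mm: "\<mu> * \<mu>' = 1" unfolding \<mu>'_def using m0 by simp
  have msum: "\<mu> + \<mu>' = l - 1"
  proof -
    have "\<mu> * (\<mu> + \<mu>') = \<mu> * (l - 1)" using quad mm by (simp add: algebra_simps)
    thus ?thesis using m0 by simp
  qed
  define y where "y p = R p *\<^sub>v x (sc p) - \<mu>' \<cdot>\<^sub>v x p" for p
  have yc: "y p \<in> carrier_vec 3" if "p < n" for p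
    unfolding y_def using R_props[OF that] xc by simp
  have Py: "R p *\<^sub>v y (sc p) = \<mu> \<cdot>\<^sub>v y p" if p: "p < n" for p
  proof -
    define s where "s = sc p"
    have s: "s < n" unfolding s_def by (rule sc_lt)
    note Rp = R_props[OF p] and Rs = R_props[OF s]
    have e: "R s *\<^sub>v x (sc s) = l \<cdot>\<^sub>v x s - x s - transpose_mat (R p) *\<^sub>v x p"
      using vec_solve[OF xc _ _ _ eq[OF s]] pr_sc[OF p] Rs Rp xc unfolding s_def by simp
    have "R p *\<^sub>v y s = R p *\<^sub>v (R s *\<^sub>v x (sc s)) - R p *\<^sub>v (\<mu>' \<cdot>\<^sub>v x s)"
      unfolding y_def by (rule mult_minus_distrib_mat_vec) (use Rp Rs xc in auto)
    also have "R p *\<^sub>v (\<mu>' \<cdot>\<^sub>v x s) = \<mu>' \<cdot>\<^sub>v (R p *\<^sub>v x s)"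
      by (rule mult_mat_vec) (use Rp xc in auto)
    also have "R p *\<^sub>v (R s *\<^sub>v x (sc s)) = R p *\<^sub>v (l \<cdot>\<^sub>v x s - x s) - R p *\<^sub>v (transpose_mat (R p) *\<^sub>v x p)"
      unfolding e by (rule mult_minus_distrib_mat_vec) (use Rp xc in auto)
    also have "R p *\<^sub>v (transpose_mat (R p) *\<^sub>v x p) = x p" by (rule RTR(2)[OF p xc])
    also have "R p *\<^sub>v (l \<cdot>\<^sub>v x s - x s) = R p *\<^sub>v (l \<cdot>\<^sub>v x s) - R p *\<^sub>v x s"
      by (rule mult_minus_distrib_mat_vec) (use Rp xc in auto)
    also have "R p *\<^sub>v (l \<cdot>\<^sub>v x s) = l \<cdot>\<^sub>v (R p *\<^sub>v x s)"
      by (rule mult_mat_vec) (use Rp xc in auto)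
    finally have L: "R p *\<^sub>v y s = l \<cdot>\<^sub>v (R p *\<^sub>v x s) - R p *\<^sub>v x s - x p - \<mu>' \<cdot>\<^sub>v (R p *\<^sub>v x s)" .
    have Px: "R p *\<^sub>v x s \<in> carrier_vec 3" using Rp xc by simp
    show ?thesis unfolding s_def[symmetric] L
    proof (intro eq_vecI)
      fix i assume "i < dim_vec (\<mu> \<cdot>\<^sub>v y p)"
      hence i: "i < 3" using yc[OF p] by simp
      have "l = \<mu> + \<mu>' + 1" using msum by simp
      hence "l * (R p *\<^sub>v x s) $ i - (R p *\<^sub>v x s) $ i - x p $ i - \<mu>' * (R p *\<^sub>v x s) $ i
          = \<mu> * ((R p *\<^sub>v x s) $ i - \<mu>' * x p $ i)"
        using mm by (simp add: algebra_simps)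
      moreover have "(l \<cdot>\<^sub>v (R p *\<^sub>v x s) - R p *\<^sub>v x s - x p - \<mu>' \<cdot>\<^sub>v (R p *\<^sub>v x s)) $ i
          = l * (R p *\<^sub>v x s) $ i - (R p *\<^sub>v x s) $ i - x p $ i - \<mu>' * (R p *\<^sub>v x s) $ i"
        using i xc[of p] carrier_matD[OF Rp(1)] by simp
      moreover have "(\<mu> \<cdot>\<^sub>v y p) $ i = \<mu> * ((R p *\<^sub>v x s) $ i - \<mu>' * x p $ i)"
        unfolding y_def s_def[symmetric] using i xc[of p] carrier_matD[OF Rp(1)] by simp
      ultimately show "(l \<cdot>\<^sub>v (R p *\<^sub>v x s) - R p *\<^sub>v x s - x p - \<mu>' \<cdot>\<^sub>v (R p *\<^sub>v x s)) $ i = (\<mu> \<cdot>\<^sub>v y p) $ i"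
        by simp
    qed (use carrier_matD[OF Rp(1)] xc yc[OF p] in simp)
  qed
  show ?thesis
  proof (cases "\<exists>p<n. y p \<noteq> 0\<^sub>v 3")
    case True
    from P_eig_E[OF yc True m0 Py] have "y 0 \<noteq> 0\<^sub>v 3 \<and> Gc n *\<^sub>v y 0 = \<mu> ^ n \<cdot>\<^sub>v y 0" .
    moreover have "l = 1 + \<mu> + 1/\<mu>" using msum unfolding \<mu>'_def by (simp add: algebra_simps)
    ultimately show ?thesis using m0 yc[of 0] n3 by auto
  next
    case False
    have Px: "R p *\<^sub>v x (sc p) = \<mu>' \<cdot>\<^sub>v x p" if p: "p < n" for p
    proof -
      have "y p = 0\<^sub>v 3" using False p by auto
      hence yi: "(R p *\<^sub>v x (sc p) - \<mu>' \<cdot>\<^sub>v x p) $ i = 0" if "i < 3" for i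
        unfolding y_def using that by simp
      show ?thesis
      proof (intro eq_vecI)
        fix i assume "i < dim_vec (\<mu>' \<cdot>\<^sub>v x p)"
        hence i: "i < 3" using xc[of p] by simp
        thus "(R p *\<^sub>v x (sc p)) $ i = (\<mu>' \<cdot>\<^sub>v x p) $ i"
          using yi[OF i] xc[of p] by simp
      qed (use carrier_matD[OF R_props(1)[OF p]] xc in simp)
    qed
    have m0': "\<mu>' \<noteq> 0" unfolding \<mu>'_def using m0 by simp
    from P_eig_E[OF _ xnz m0' Px] xc have "x 0 \<noteq> 0\<^sub>v 3 \<and> Gc n *\<^sub>v x 0 = \<mu>' ^ n \<cdot>\<^sub>v x 0" by blast
    moreover have "l = 1 + \<mu>' + 1/\<mu>'" using msum m0 unfolding \<mu>'_def by (simp add: algebra_simps)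
    ultimately show ?thesis using m0' xc by blast
  qed
qed

end



lemma cos_red: assumes n: "n > 0"
  shows "\<exists>k<n. cos ((a + 2*pi*of_int m)/real n) = cos ((a + 2*pi*real k)/real n)"
proof -
  define k where "k = nat (m mod int n)"
  define t where "t = m div int n"
  have km: "int k = m mod int n" unfolding k_def using n by simp
  have mk: "m = int k + int n * t" unfolding km t_def by simp
  have kn: "k < n" unfolding k_def using n by (simp add: nat_less_iff)
  have "of_int m = real k + real n * of_int t" using arg_cong[OF mk, of "of_int :: int \<Rightarrow> real"] by simp
  hence "(a + 2*pi*of_int m)/real n = (a + 2*pi*real k)/real n + 2*pi*of_int t"
    using n by (simp add: field_simps)
  hence "cos ((a + 2*pi*of_int m)/real n) = cos ((a + 2*pi*real k)/real n)"
    by (simp add: cos_add)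
  thus ?thesis using kn by blast
qed

lemma cis_pow_eq: assumes h: "\<kappa>^n = cis \<theta>" and n: "n > 0"
  shows "\<exists>m::int. \<kappa> = cis ((\<theta> + 2*pi*of_int m)/real n)"
proof -
  have "norm \<kappa> ^ n = 1 ^ n" using arg_cong[OF h, of norm] by (simp add: norm_power)
  hence nk: "norm \<kappa> = 1" using power_eq_iff_eq_base[OF n] by (metis norm_ge_zero zero_le_one)
  hence k0: "\<kappa> \<noteq> 0" by auto
  have kc: "\<kappa> = cis (Arg \<kappa>)" using cis_Arg[OF k0] nk by (simp add: sgn_div_norm)
  have "cis (real n * Arg \<kappa>) = cis \<theta>" using h kc DeMoivre by metis
  hence "sin (real n * Arg \<kappa>) = sin \<theta> \<and> cos (real n * Arg \<kappa>) = cos \<theta>"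
    by (metis cis.sel(1) cis.sel(2))
  then obtain m :: int where "real n * Arg \<kappa> = \<theta> + 2*pi*of_int m" using sin_cos_eq_iff by blast
  hence "Arg \<kappa> = (\<theta> + 2*pi*of_int m)/real n" using n by (simp add: field_simps)
  hence "\<kappa> = cis ((\<theta> + 2*pi*of_int m)/real n)" using kc by metis
  thus ?thesis by blast
qed

lemma cis_sum: "1 + cis \<phi> + 1/cis \<phi> = complex_of_real (1 + 2*cos \<phi>)"
  by (simp add: complex_eq_iff divide_complex_def)

lemma in_set_aux: assumes n: "n > 0" and k0: "\<kappa> \<noteq> 0" and c: "\<kappa>^n = 1 \<or> \<kappa>^n = cis (-g)"
  shows "1 + \<kappa> + 1/\<kappa> \<in> (\<lambda>k. complex_of_real (1 + 2 * cos (g / real n - 2 * real k * pi / real n))) ` {0..<n}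
       \<union> (\<lambda>k. complex_of_real (1 + 2 * cos (2 * real k * pi / real n))) ` {0..<n}"
proof -
  obtain \<theta> where th: "\<kappa>^n = cis \<theta>" "\<theta> = 0 \<or> \<theta> = -g" using c by (metis cis_zero)
  obtain m :: int where km: "\<kappa> = cis ((\<theta> + 2*pi*of_int m)/real n)" using cis_pow_eq[OF th(1) n] by blast
  obtain k where k: "k < n" "cos ((\<theta> + 2*pi*of_int m)/real n) = cos ((\<theta> + 2*pi*real k)/real n)"
    using cos_red[OF n] by blast
  have val: "1 + \<kappa> + 1/\<kappa> = complex_of_real (1 + 2*cos ((\<theta> + 2*pi*real k)/real n))"
    unfolding km cis_sum k(2) ..
  show ?thesis using th(2)
  proof
    assume "\<theta> = 0"
    hence a: "(\<theta> + 2*pi*real k)/real n = 2 * real k * pi / real n" by simp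
    have e: "1 + \<kappa> + 1/\<kappa> = complex_of_real (1 + 2 * cos (2 * real k * pi / real n))" unfolding val a ..
    show ?thesis by (intro UnI2 rev_image_eqI[of k]) (use e k(1) in auto)
  next
    assume "\<theta> = -g"
    hence "(\<theta> + 2*pi*real k)/real n = - (g / real n - 2 * real k * pi / real n)"
      using n by (simp add: field_simps)
    hence "cos ((\<theta> + 2*pi*real k)/real n) = cos (g / real n - 2 * real k * pi / real n)"
      by (metis cos_minus)
    hence e: "1 + \<kappa> + 1/\<kappa> = complex_of_real (1 + 2 * cos (g / real n - 2 * real k * pi / real n))" using val by simp
    show ?thesis by (intro UnI1 rev_image_eqI[of k]) (use e k(1) in auto)
  qed
qed

lemma in_set: assumes n: "n > 0" and k0: "\<kappa> \<noteq> 0" and c: "\<kappa>^n = 1 \<or> \<kappa>^n = cis g \<or> \<kappa>^n = cis (-g)"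
  shows "1 + \<kappa> + 1/\<kappa> \<in> (\<lambda>k. complex_of_real (1 + 2 * cos (g / real n - 2 * real k * pi / real n))) ` {0..<n}
       \<union> (\<lambda>k. complex_of_real (1 + 2 * cos (2 * real k * pi / real n))) ` {0..<n}"
proof (cases "\<kappa>^n = cis g")
  case False
  thus ?thesis using in_set_aux[OF n k0] c by blast
next
  case True
  have "(1/\<kappa>)^n = 1 / cis g" using True by (simp add: power_one_over)
  also have "1 / cis g = cis (-g)" by (simp add: divide_complex_def)
  finally have "(1/\<kappa>)^n = cis (-g)" .
  hence "1 + 1/\<kappa> + 1/(1/\<kappa>) \<in> (\<lambda>k. complex_of_real (1 + 2 * cos (g / real n - 2 * real k * pi / real n))) ` {0..<n}
       \<union> (\<lambda>k. complex_of_real (1 + 2 * cos (2 * real k * pi / real n))) ` {0..<n}"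
    using in_set_aux[OF n, of "1/\<kappa>" g] k0 by simp
  moreover have "1 + 1/\<kappa> + 1/(1/\<kappa>) = 1 + \<kappa> + 1/\<kappa>" by simp
  ultimately show ?thesis by (simp add: add_ac)
qed

lemma from_set: assumes n: "n > 0"
  and z: "z \<in> (\<lambda>k. complex_of_real (1 + 2 * cos (g / real n - 2 * real k * pi / real n))) ` {0..<n}
       \<union> (\<lambda>k. complex_of_real (1 + 2 * cos (2 * real k * pi / real n))) ` {0..<n}"
  shows "\<exists>\<kappa>. \<kappa> \<noteq> 0 \<and> z = 1 + \<kappa> + 1/\<kappa> \<and> (\<kappa>^n = 1 \<or> \<kappa>^n = cis (-g))"
  using z
proof
  assume "z \<in> (\<lambda>k. complex_of_real (1 + 2 * cos (g / real n - 2 * real k * pi / real n))) ` {0..<n}"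
  then obtain k where z: "z = complex_of_real (1 + 2 * cos (g / real n - 2 * real k * pi / real n))" by auto
  define \<kappa> where "\<kappa> = cis ((2 * real k * pi - g) / real n)"
  have nr: "real n \<noteq> 0" using n by simp
  have "real n * ((2 * real k * pi - g) / real n) = 2 * pi * real k - g" using nr by (simp add: field_simps)
  hence "\<kappa>^n = cis (2 * pi * real k - g)" unfolding \<kappa>_def DeMoivre by simp
  also have "cis (2 * pi * real k - g) = cis (2 * pi * real k) * cis (-g)"
    using cis_mult[of "2 * pi * real k" "-g"] by simp
  also have "cis (2 * pi * real k) = 1" by (rule cis_multiple_2pi) simp
  finally have p: "\<kappa>^n = cis (-g)" by simp
  have "(2 * real k * pi - g) / real n = - (g / real n - 2 * real k * pi / real n)"
    using n by (simp add: field_simps)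
  hence "cos ((2 * real k * pi - g) / real n) = cos (g / real n - 2 * real k * pi / real n)"
    by (metis cos_minus)
  hence "z = 1 + \<kappa> + 1/\<kappa>" unfolding z \<kappa>_def cis_sum by simp
  moreover have "\<kappa> \<noteq> 0" unfolding \<kappa>_def by simp
  ultimately show ?thesis using p by blast
next
  assume "z \<in> (\<lambda>k. complex_of_real (1 + 2 * cos (2 * real k * pi / real n))) ` {0..<n}"
  then obtain k where z: "z = complex_of_real (1 + 2 * cos (2 * real k * pi / real n))" by auto
  define \<kappa> where "\<kappa> = cis (2 * real k * pi / real n)"
  have nr: "real n \<noteq> 0" using n by simp
  have "real n * (2 * real k * pi / real n) = 2 * pi * real k" using nr by (simp add: field_simps)
  hence "\<kappa>^n = cis (2 * pi * real k)" unfolding \<kappa>_def DeMoivre by simp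
  also have "\<dots> = 1" by (rule cis_multiple_2pi) simp
  finally have p: "\<kappa>^n = 1" .
  have "z = 1 + \<kappa> + 1/\<kappa>" unfolding z \<kappa>_def cis_sum by simp
  moreover have "\<kappa> \<noteq> 0" unfolding \<kappa>_def by simp
  ultimately show ?thesis using p by blast
qed


theorem theorem3:
  fixes n :: nat and Rm :: "nat \<Rightarrow> real mat" and \<gamma> :: real
  assumes "n \<ge> 3"
    and "\<And>i. i \<in> {1..n} \<Longrightarrow> Rm i \<in> SO3"
    and "is_rotation_angle (cycle_error n Rm) \<gamma>"
  shows "{z. eigenvalue (map_mat complex_of_real (cycle_matrix n Rm)) z} =
         (\<lambda>k. complex_of_real (1 + 2 * cos (\<gamma> / real n - 2 * real k * pi / real n))) ` {0..<n}
       \<union> (\<lambda>k. complex_of_real (1 + 2 * cos (2 * real k * pi / real n))) ` {0..<n}"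
proof -
  interpret cyc n Rm using assms(1,2) by unfold_locales auto
  obtain u where u: "u \<in> carrier_vec 3" "(u$0)\<^sup>2 + (u$1)\<^sup>2 + (u$2)\<^sup>2 = 1"
    "cycle_error n Rm = rot_exp \<gamma> u"
    using assms(3) unfolding is_rotation_angle_def by blast
  have EG: "map_mat complex_of_real (rot_exp \<gamma> u) = Gc n" using E_Gc u(3) by simp
  have n0: "n > 0" using assms(1) by simp
  show ?thesis
  proof (intro equalityI subsetI)
    fix z assume "z \<in> {z. eigenvalue (map_mat complex_of_real (cycle_matrix n Rm)) z}"
    hence "eigenvalue CM z" by (simp add: CM_def)
    from sub[OF this] obtain \<kappa> w where kw: "\<kappa> \<noteq> 0" "z = 1 + \<kappa> + 1/\<kappa>" "w \<in> carrier_vec 3"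
      "w \<noteq> 0\<^sub>v 3" "Gc n *\<^sub>v w = \<kappa>^n \<cdot>\<^sub>v w" by blast
    have "\<kappa>^n = 1 \<or> \<kappa>^n = cis \<gamma> \<or> \<kappa>^n = cis (-\<gamma>)"
      using E_ev_sub[OF u(2) kw(3) kw(4)] kw(5) EG by simp
    from in_set[OF n0 kw(1) this] kw(2)
    show "z \<in> (\<lambda>k. complex_of_real (1 + 2 * cos (\<gamma> / real n - 2 * real k * pi / real n))) ` {0..<n}
       \<union> (\<lambda>k. complex_of_real (1 + 2 * cos (2 * real k * pi / real n))) ` {0..<n}" by simp
  next
    fix z assume "z \<in> (\<lambda>k. complex_of_real (1 + 2 * cos (\<gamma> / real n - 2 * real k * pi / real n))) ` {0..<n}
       \<union> (\<lambda>k. complex_of_real (1 + 2 * cos (2 * real k * pi / real n))) ` {0..<n}"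
    from from_set[OF n0 this] obtain \<kappa> where k: "\<kappa> \<noteq> 0" "z = 1 + \<kappa> + 1/\<kappa>"
      "\<kappa>^n = 1 \<or> \<kappa>^n = cis (-\<gamma>)" by blast
    have "\<exists>w. w \<in> carrier_vec 3 \<and> w \<noteq> 0\<^sub>v 3 \<and> Gc n *\<^sub>v w = \<kappa>^n \<cdot>\<^sub>v w"
    proof (cases "\<kappa>^n = 1")
      case True
      show ?thesis
        using E_ev_one(1,2)[OF u(2) u(1)] E_ev_one(3)[OF u(2) u(1), of \<gamma>] EG True
        by (intro exI[of _ "map_vec complex_of_real u"]) simp
    next
      case False
      hence "\<kappa>^n = cis (-\<gamma>)" using k(3) by simp
      thus ?thesis using E_ev_minus[OF u(2) u(1), of \<gamma>] EG by simp
    qed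
    then obtain w where "w \<in> carrier_vec 3" "w \<noteq> 0\<^sub>v 3" "Gc n *\<^sub>v w = \<kappa>^n \<cdot>\<^sub>v w" by blast
    from construct[OF this k(1)] k(2)
    show "z \<in> {z. eigenvalue (map_mat complex_of_real (cycle_matrix n Rm)) z}" by (simp add: CM_def)
  qed
qed

end
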